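(* For every $n\in\mathbb{N}$ with $n>1$, the monoid $\mathrm{lps}_n$ has exponential growth.
   Context: Let $\mathcal{A}_n=\{1<2<\cdots<n\}$. An lPS tableau is a finite (possibly empty) sequence of nonempty bottom-justified columns of boxes filled with positive integers, such that the entries of each column are strictly decreasing from top to bottom and the bottom entries of the columns form a weakly increasing sequence from left to right. Right insertion of a symbol $a$ into an lPS tableau $B$: if $a$ is greater than or equal to every entry of the bottom row, append a new column consisting of $a$ at the right end; otherwise, let $z$ be the leftmost bottom-row entry with $z>a$ and put $a$ in a new box at the bottom of the column of $z$ (the previous entries of that column move up one box). For $w=w_1\cdots w_k$, $\mathfrak{R}_\ell(w)$ is obtained by starting with the empty tableau and right-inserting $w_1,\dots,w_k$ in order. The monoid $\mathrm{lps}_n$ is the quotient of the free monoid $\mathcal{A}_n^*$ by the congruence $u\equiv v\iff\mathfrak{R}_\ell(u)=\mathfrak{R}_\ell(v)$. For a monoid $M$ generated by a finite set $\Sigma$, the growth function $\gamma_M(N)$ is the number of elements of $M$ expressible as products of at most $N$ generators; $M$ has exponential growth if $\gamma_M$ is bounded below by $k^N$ for some $k$ (up to the usual equivalence of growth functions: $f\preceq g$ iff $f(N)\le g(cN)$ for some constant $c>0$ and all large $N$), a notion independent of the finite generating set. *)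

theory Defs
  imports Complex_Main
begin

text \<open>An lPS tableau is a list of columns (left to right); each column is a list of
  entries read from top to bottom (strictly decreasing), so the bottom entry of a
  column c is last c.\<close>

type_synonym lps_tableau = "nat list list"

definition lps_tableau :: "lps_tableau \<Rightarrow> bool" where
  "lps_tableau T \<longleftrightarrow> (\<forall>c \<in> set T. c \<noteq> [] \<and> sorted_wrt (>) c \<and> (\<forall>x\<in>set c. x > 0))
      \<and> sorted (map last T)"

fun lps_rins :: "lps_tableau \<Rightarrow> nat \<Rightarrow> lps_tableau" where
  "lps_rins [] a = [[a]]"
| "lps_rins (c # cs) a = (if a < last c then (c @ [a]) # cs else c # lps_rins cs a)"

definition lps_R :: "nat list \<Rightarrow> lps_tableau" where
  "lps_R w = foldl lps_rins [] w"

definition lps_words :: "nat \<Rightarrow> nat list set" where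
  "lps_words n = {w. set w \<subseteq> {1..n}}"

text \<open>The element of lps_n represented by w: its congruence class in A_n^*.\<close>

definition lps_class :: "nat \<Rightarrow> nat list \<Rightarrow> nat list set" where
  "lps_class n w = {v \<in> lps_words n. lps_R v = lps_R w}"

definition lps_growth :: "nat \<Rightarrow> nat \<Rightarrow> nat" where
  "lps_growth n N = card {lps_class n w | w. w \<in> lps_words n \<and> length w \<le> N}"

text \<open>Exponential growth: k^N \<preceq> gamma for some k > 1, i.e. k^N \<le> gamma(c N) for some
  constant c > 0 and all sufficiently large N.\<close>

definition exponential_growth :: "(nat \<Rightarrow> nat) \<Rightarrow> bool" where
  "exponential_growth \<gamma> \<longleftrightarrow>
     (\<exists>k::real. k > 1 \<and> (\<exists>c::nat. c > 0 \<and>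
        (\<forall>\<^sub>F N in sequentially. k ^ N \<le> real (\<gamma> (c * N)))))"

end

theory Submission
  imports Defs
begin

definition colb :: "bool \<Rightarrow> nat list" where
  "colb b = (if b then [2,1] else [1])"

definition enc :: "bool list \<Rightarrow> nat list" where
  "enc bs = concat (map colb bs)"

lemma rins1: "\<forall>c\<in>set T. last c = 1 \<Longrightarrow> lps_rins T 1 = T @ [[1]]"
  by (induction T) auto

lemma rins2: "\<forall>c\<in>set T. last c = 1 \<Longrightarrow> lps_rins T 2 = T @ [[2]]"
  by (induction T) auto

lemma rins21: "\<forall>c\<in>set T. last c = 1 \<Longrightarrow> lps_rins (T @ [[2]]) 1 = T @ [[2,1]]"
  by (induction T) auto

lemma fold_enc: "\<forall>c\<in>set T. last c = 1 \<Longrightarrow> foldl lps_rins T (enc bs) = T @ map colb bs"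
proof (induction bs arbitrary: T)
  case Nil then show ?case by (simp add: enc_def)
next
  case (Cons b bs)
  show ?case
  proof (cases b)
    case True
    have "foldl lps_rins T (enc (b # bs)) = foldl lps_rins (T @ [[2,1]]) (enc bs)"
      using True Cons.prems rins2[of T] rins21[of T] by (simp add: enc_def colb_def)
    also have "\<dots> = (T @ [[2,1]]) @ map colb bs"
      using Cons.prems by (intro Cons.IH) auto
    finally show ?thesis using True by (simp add: colb_def)
  next
    case False
    have "foldl lps_rins T (enc (b # bs)) = foldl lps_rins (T @ [[1]]) (enc bs)"
      using False Cons.prems rins1[of T] by (simp add: enc_def colb_def)
    also have "\<dots> = (T @ [[1]]) @ map colb bs"
      using Cons.prems by (intro Cons.IH) auto
    finally show ?thesis using False by (simp add: colb_def)
  qed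
qed

lemma R_enc: "lps_R (enc bs) = map colb bs"
  using fold_enc[of "[]" bs] by (simp add: lps_R_def)

lemma colb_inj: "inj colb"
  by (auto simp: inj_def colb_def)

lemma enc_len: "length (enc bs) \<le> 2 * length bs"
  by (induction bs) (auto simp: enc_def colb_def)

lemma enc_words: "n > 1 \<Longrightarrow> enc bs \<in> lps_words n"
  by (induction bs) (auto simp: enc_def colb_def lps_words_def)

lemma growth_bound:
  assumes "n > 1"
  shows "2 ^ N \<le> lps_growth n (2 * N)"
proof -
  let ?B = "{bs :: bool list. set bs \<subseteq> UNIV \<and> length bs = N}"
  let ?S = "{lps_class n w | w. w \<in> lps_words n \<and> length w \<le> 2 * N}"
  have cardB: "card ?B = 2 ^ N"
    using card_lists_length_eq[of "UNIV :: bool set" N] by simp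
  have inj: "inj_on (\<lambda>bs. lps_class n (enc bs)) ?B"
  proof (rule inj_onI)
    fix x y assume "x \<in> ?B" "y \<in> ?B" and eq: "lps_class n (enc x) = lps_class n (enc y)"
    have "enc x \<in> lps_class n (enc x)" using enc_words[OF assms] by (simp add: lps_class_def)
    then have "enc x \<in> lps_class n (enc y)" using eq by simp
    then have "lps_R (enc x) = lps_R (enc y)" by (simp add: lps_class_def)
    then have "map colb x = map colb y" by (simp add: R_enc)
    then show "x = y" using colb_inj by (simp add: inj_map_eq_map)
  qed
  have sub: "(\<lambda>bs. lps_class n (enc bs)) ` ?B \<subseteq> ?S"
    using enc_words[OF assms] enc_len by fastforce
  have "?S = lps_class n ` {w. set w \<subseteq> {1..n} \<and> length w \<le> 2 * N}"
    by (auto simp: lps_words_def)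
  then have fin: "finite ?S"
    using finite_lists_length_le[of "{1..n}" "2*N"] by simp
  have "card ((\<lambda>bs. lps_class n (enc bs)) ` ?B) = 2 ^ N"
    using card_image[OF inj] cardB by simp
  then show ?thesis
    using card_mono[OF fin sub] unfolding lps_growth_def by simp
qed

theorem corollary4p2:
  fixes n :: nat
  assumes "n > 1"
  shows "exponential_growth (lps_growth n)"
  unfolding exponential_growth_def
proof (intro exI conjI)
  show "(2::real) > 1" by simp
  show "(2::nat) > 0" by simp
  show "\<forall>\<^sub>F N in sequentially. (2::real) ^ N \<le> real (lps_growth n (2 * N))"
  proof (rule always_eventually, rule allI)
    fix N
    have "(2::nat) ^ N \<le> lps_growth n (2 * N)" using growth_bound[OF assms] .
    then show "(2::real) ^ N \<le> real (lps_growth n (2 * N))"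
      by (metis of_nat_le_iff of_nat_numeral of_nat_power)
  qed
qed

end
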